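(* For all positive integers $k$ and $T_c$ with $T_c\ge p^2$, $N_{p\cdot T_c,\,k+1}=N_{T_c,\,k}$.
   Context: $p$ is a prime with $p>3$ and $n>1$ is an integer with $\gcd(n,p)=\gcd(n,p^2-1)=1$, so the Chebyshev polynomial $T_n$ (first kind: $T_0=1$, $T_1=x$, $T_d=2xT_{d-1}-T_{d-2}$) induces a permutation of $\mathbb{Z}_{p^k}$ for every $k\ge1$. The functional graph $F_{p^k}$ has vertex set $\mathbb{Z}_{p^k}$ and a directed edge from $x$ to $y$ iff $y=T_n(x)\bmod p^k$; it is a disjoint union of directed cycles. $N_{a,k}$ denotes the number of cycles of length $a$ in $F_{p^k}$. *)

theory Defs
  imports "HOL-Computational_Algebra.Primes"
begin

fun cheb :: "nat \<Rightarrow> int \<Rightarrow> int" where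
  "cheb 0 x = 1"
| "cheb (Suc 0) x = x"
| "cheb (Suc (Suc d)) x = 2 * x * cheb (Suc d) x - cheb d x"

definition cheb_map :: "int \<Rightarrow> nat \<Rightarrow> nat \<Rightarrow> int \<Rightarrow> int" where
  "cheb_map p n k x = cheb n x mod p ^ k"

definition vertices :: "int \<Rightarrow> nat \<Rightarrow> int set" where
  "vertices p k = {0..<p ^ k}"

definition cycle_of :: "int \<Rightarrow> nat \<Rightarrow> nat \<Rightarrow> int \<Rightarrow> int set" where
  "cycle_of p n k x = {(cheb_map p n k ^^ i) x | i. True}"

definition num_cycles :: "int \<Rightarrow> nat \<Rightarrow> nat \<Rightarrow> nat \<Rightarrow> nat" where
  "num_cycles p n a k =
     card {C. \<exists>x \<in> vertices p k. C = cycle_of p n k x \<and> card C = a}"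

end

theory Submission
  imports Defs "HOL-Number_Theory.Number_Theory"
begin


lemma nat_2induct:
  assumes "P 0" "P (Suc 0)" "\<And>j. P j \<Longrightarrow> P (Suc j) \<Longrightarrow> P (Suc (Suc j))"
  shows "P j"
proof -
  have "P j \<and> P (Suc j)" by (induction j) (use assms in auto)
  then show ?thesis by simp
qed

fun chebV :: "nat \<Rightarrow> int \<Rightarrow> int" where
  "chebV 0 x = 0"
| "chebV (Suc 0) x = 1"
| "chebV (Suc (Suc d)) x = 2 * x * chebV (Suc d) x - chebV d x"

definition chd :: "nat \<Rightarrow> int \<Rightarrow> int" where
  "chd j x = int j * chebV j x"

fun che :: "nat \<Rightarrow> int \<Rightarrow> int" where
  "che 0 x = 0"
| "che (Suc 0) x = 0"
| "che (Suc (Suc d)) x = 2 * x * che (Suc d) x + 2 * chd (Suc d) x - che d x"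

lemma cheb_Suc_both: "cheb (Suc j) x = x * cheb j x + (x^2-1) * chebV j x \<and> chebV (Suc j) x = cheb j x + x * chebV j x"
proof (induction j rule: nat_2induct)
  case (3 j)
  then show ?case by (simp only: cheb.simps chebV.simps) (simp add: algebra_simps power2_eq_square)
qed (auto simp: algebra_simps power2_eq_square)

lemma cheb_Suc: "cheb (Suc j) x = x * cheb j x + (x^2-1) * chebV j x"
  using cheb_Suc_both by blast
lemma chebV_Suc: "chebV (Suc j) x = cheb j x + x * chebV j x"
  using cheb_Suc_both by blast

lemma cheb_Suc': "cheb (Suc j) x = x * chebV (Suc j) x - chebV j x"
  by (simp add: cheb_Suc chebV_Suc algebra_simps power2_eq_square)

lemma pell: "cheb j x ^ 2 - (x^2-1) * chebV j x ^ 2 = 1"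
proof (induction j)
  case 0 then show ?case by simp
next
  case (Suc j)
  have "(x * cheb j x + (x^2-1) * chebV j x)^2 - (x^2-1) * (cheb j x + x * chebV j x)^2
      = (x^2 - (x^2-1)) * (cheb j x ^ 2 - (x^2-1) * chebV j x ^ 2)"
    by (simp add: algebra_simps power2_eq_square)
  then show ?case unfolding cheb_Suc chebV_Suc using Suc by simp
qed

lemma chd_rec: "chd (Suc (Suc j)) x = 2 * cheb (Suc j) x + 2 * x * chd (Suc j) x - chd j x"
  unfolding chd_def using cheb_Suc'[of "Suc j" x] cheb_Suc'[of j x]
  by (simp add: algebra_simps)

lemma cheb_1 [simp]: "cheb j 1 = 1"
  by (induction j rule: nat_2induct) auto
lemma cheb_m1: "cheb j (-1) = (-1)^j"
  by (induction j rule: nat_2induct) auto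
lemma chebV_1: "chebV j 1 = int j"
  by (induction j rule: nat_2induct) auto
lemma chebV_m1: "chebV j (-1) = (-1)^(Suc j) * int j"
  by (induction j rule: nat_2induct) (auto simp: algebra_simps)

lemma cheb_cong: "m dvd x - y \<Longrightarrow> m dvd cheb j x - cheb j y"
proof (induction j rule: nat_2induct)
  case (3 j)
  have "2 * x * cheb (Suc j) x - cheb j x - (2 * y * cheb (Suc j) y - cheb j y)
      = 2 * x * (cheb (Suc j) x - cheb (Suc j) y) + 2 * (x - y) * cheb (Suc j) y - (cheb j x - cheb j y)"
    by (simp add: algebra_simps)
  moreover have "m dvd 2 * x * (cheb (Suc j) x - cheb (Suc j) y) + 2 * (x - y) * cheb (Suc j) y - (cheb j x - cheb j y)"
    using 3 by (meson dvd_add dvd_diff dvd_mult dvd_mult2)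
  ultimately show ?case by (simp only: cheb.simps)
qed auto

lemma chebV_cong: "m dvd x - y \<Longrightarrow> m dvd chebV j x - chebV j y"
proof (induction j rule: nat_2induct)
  case (3 j)
  have "2 * x * chebV (Suc j) x - chebV j x - (2 * y * chebV (Suc j) y - chebV j y)
      = 2 * x * (chebV (Suc j) x - chebV (Suc j) y) + 2 * (x - y) * chebV (Suc j) y - (chebV j x - chebV j y)"
    by (simp add: algebra_simps)
  moreover have "m dvd 2 * x * (chebV (Suc j) x - chebV (Suc j) y) + 2 * (x - y) * chebV (Suc j) y - (chebV j x - chebV j y)"
    using 3 by (meson dvd_add dvd_diff dvd_mult dvd_mult2)
  ultimately show ?case by (simp only: chebV.simps)
qed auto

lemma chd_cong: "m dvd x - y \<Longrightarrow> m dvd chd j x - chd j y"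
proof -
  assume "m dvd x - y"
  then have "m dvd int j * (chebV j x - chebV j y)" using chebV_cong by (simp add: dvd_mult)
  then show ?thesis by (simp add: chd_def algebra_simps)
qed

lemma taylor2: "h^3 dvd cheb j (x+h) - cheb j x - h * chd j x - h^2 * che j x"
proof (induction j rule: nat_2induct)
  case 1 then show ?case by (simp add: chd_def)
next
  case 2 then show ?case by (simp add: chd_def)
next
  case (3 j)
  from 3(1) obtain r0 where r0: "cheb j (x+h) - cheb j x - h * chd j x - h^2 * che j x = h^3 * r0"
    by (auto elim: dvdE)
  from 3(2) obtain r1 where r1: "cheb (Suc j) (x+h) - cheb (Suc j) x - h * chd (Suc j) x - h^2 * che (Suc j) x = h^3 * r1"
    by (auto elim: dvdE)
  have "cheb (Suc (Suc j)) (x+h) - cheb (Suc (Suc j)) x - h * chd (Suc (Suc j)) x - h^2 * che (Suc (Suc j)) x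
     = h^3 * (2 * (x+h) * r1 - r0 + 2 * che (Suc j) x)"
    unfolding cheb.simps chd_rec che.simps
    using r0 r1 by (simp add: algebra_simps power2_eq_square power3_eq_cube) 
  then show ?case by simp
qed

lemma taylor1: "h^2 dvd cheb j (x+h) - cheb j x - h * chd j x"
proof -
  have "h^2 dvd h^3" by (simp add: le_imp_power_dvd)
  then have "h^2 dvd (cheb j (x+h) - cheb j x - h * chd j x - h^2 * che j x) + h^2 * che j x"
    using taylor2 dvd_trans by (meson dvd_add dvd_triv_left)
  then show ?thesis by simp
qed

fun chebc :: "nat \<Rightarrow> complex \<Rightarrow> complex" where
  "chebc 0 x = 1"
| "chebc (Suc 0) x = x"
| "chebc (Suc (Suc d)) x = 2 * x * chebc (Suc d) x - chebc d x"

lemma cheb_chebc: "of_int (cheb j x) = chebc j (of_int x)"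
  by (induction j rule: nat_2induct) auto

lemma chebc_closed: assumes nzw: "w \<noteq> 0" shows "chebc j ((w + inverse w)/2) = (w^j + inverse w ^ j)/2"
proof (induction j rule: nat_2induct)
  case (3 j)
  define v where "v = inverse w"
  have wv: "w * v = 1" using nzw v_def by simp
  have "(w + v) * (w * w^j + v * v^j) = w*w*w^j + v*v*v^j + (w*v)*(v^j + w^j)"
    by (simp add: algebra_simps)
  then have e: "(w + v) * (w * w^j + v * v^j) = w*w*w^j + v*v*v^j + (v^j + w^j)" using wv by simp
  have h0: "chebc j ((w + v)/2) = (w^j + v^j)/2" using 3(1) v_def by simp
  have h1: "chebc (Suc j) ((w + v)/2) = (w * w^j + v * v^j)/2" using 3(2) v_def by (simp only: power_Suc)
  have "chebc (Suc (Suc j)) ((w + v)/2) = 2 * ((w + v)/2) * chebc (Suc j) ((w + v)/2) - chebc j ((w + v)/2)"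
    by (simp only: chebc.simps)
  also have "\<dots> = (w + v) * ((w * w^j + v * v^j)/2) - (w^j + v^j)/2"
    by (simp only: h0 h1) simp
  also have "\<dots> = ((w + v) * (w * w^j + v * v^j) - (w^j + v^j))/2" by (simp add: diff_divide_distrib)
  also have "\<dots> = (w*w*w^j + v*v*v^j)/2" by (simp only: e) simp
  finally show ?case using v_def by (simp add: power_inverse)
qed auto

lemma chebc_sqrt:
  fixes x :: complex
  defines "s \<equiv> csqrt (x^2 - 1)"
  shows "chebc j x = ((x + s)^j + (x - s)^j)/2"
proof -
  have prod: "(x + s) * (x - s) = 1" unfolding s_def by (simp add: algebra_simps power2_eq_square[symmetric])
  then have nz: "x + s \<noteq> 0" by auto
  have inv: "inverse (x + s) = x - s" using prod by (metis inverse_unique)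
  have "(x + s + inverse (x + s)) / 2 = x" using inv by simp
  then show ?thesis using chebc_closed[OF nz, of j] inv by simp
qed

lemma cheb_comp: "cheb a (cheb b x) = cheb (a * b) x"
proof -
  define xc where "xc = (of_int x :: complex)"
  define s where "s = csqrt (xc^2 - 1)"
  define w where "w = xc + s"
  have prod: "w * (xc - s) = 1" unfolding s_def w_def by (simp add: algebra_simps power2_eq_square[symmetric])
  then have nz: "w \<noteq> 0" by auto
  have inv: "inverse w = xc - s" using prod by (metis inverse_unique)
  have xw: "xc = (w + inverse w)/2" using inv w_def by simp
  have cb: "chebc b xc = (w^b + inverse w^b)/2"
    by (subst xw) (rule chebc_closed[OF nz])
  have u: "(of_int (cheb b x) :: complex) = (w^b + inverse (w^b))/2"
    using cheb_chebc[of b x] cb xc_def by (simp add: power_inverse)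
  have "(of_int (cheb a (cheb b x)) :: complex) = chebc a ((w^b + inverse (w^b))/2)"
    using cheb_chebc[of a "cheb b x"] u by simp
  also have "\<dots> = ((w^b)^a + inverse (w^b) ^ a)/2" using chebc_closed[of "w^b" a] nz by simp
  also have "\<dots> = (w^(a*b) + inverse w ^ (a*b))/2" by (simp add: power_inverse power_mult[symmetric] mult.commute)
  also have "\<dots> = chebc (a*b) xc" by (subst xw) (rule chebc_closed[OF nz, symmetric])
  also have "\<dots> = of_int (cheb (a*b) x)" using cheb_chebc xc_def by simp
  finally show ?thesis by (simp only: of_int_eq_iff)
qed

definition ev :: "int \<Rightarrow> nat \<Rightarrow> int" where
  "ev x i = (if even i then (x^2-1)^(i div 2) else 0)"

lemma cheb_binom: "cheb j x = (\<Sum>i\<le>j. int (j choose i) * x^(j-i) * ev x i)"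
proof -
  define xc where "xc = (of_int x :: complex)"
  define s where "s = csqrt (xc^2 - 1)"
  have s2: "s^2 = xc^2 - 1" unfolding s_def by simp
  have 1: "chebc j xc = ((s + xc)^j + (-s + xc)^j)/2"
    using chebc_sqrt[of j xc] unfolding s_def by (simp add: add.commute)
  have 2: "(s + xc)^j + (-s + xc)^j = (\<Sum>k\<le>j. of_nat (j choose k) * (s^k + (-s)^k) * xc^(j-k))"
    unfolding binomial_ring by (simp add: sum.distrib[symmetric] algebra_simps)
  have 3: "s^k + (-s)^k = 2 * of_int (ev x k)" for k
  proof (cases "even k")
    case True
    then obtain m where k: "k = 2*m" by auto
    have "s^k = (xc^2-1)^m" unfolding k power_mult s2 by simp
    then show ?thesis using True k unfolding ev_def xc_def by simp
  next
    case False
    then show ?thesis unfolding ev_def by (simp add: power_minus_odd)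
  qed
  have "(of_int (cheb j x) :: complex) = chebc j xc" using cheb_chebc xc_def by simp
  also have "\<dots> = (\<Sum>k\<le>j. of_nat (j choose k) * of_int (ev x k) * xc^(j-k))"
    unfolding 1 2 3 by (simp add: sum_divide_distrib mult.assoc)
  also have "\<dots> = of_int (\<Sum>i\<le>j. int (j choose i) * x^(j-i) * ev x i)"
    unfolding xc_def by (simp add: algebra_simps)
  finally show ?thesis by (simp only: of_int_eq_iff)
qed

lemma fermat_int:
  assumes "prime (p::nat)"
  shows "int p dvd x^p - x"
proof -
  define y where "y = nat (x mod int p)"
  have p0: "p > 0" using assms prime_gt_0_nat by blast
  have y: "int y = x mod int p" unfolding y_def using p0 by simp
  have "[y^p = y] (mod p)"
  proof (cases "p dvd y")
    case True
    then show ?thesis using p0 by (simp add: cong_def) (metis dvd_imp_mod_0 dvd_power dvd_trans dvd_refl mod_0 power_eq_0_iff)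
  next
    case False
    then have "[y^(p-1) = 1] (mod p)" using fermat_theorem assms by blast
    then have "[y^(p-1) * y = 1 * y] (mod p)" by (rule cong_scalar_right)
    moreover have "y^(p-1) * y = y^p" using p0 by (metis Suc_diff_1 power_Suc2)
    ultimately show ?thesis by simp
  qed
  then have "[int y ^ p = int y] (mod int p)" by (metis cong_int_iff of_nat_power)
  then have "[(x mod int p) ^ p = x mod int p] (mod int p)" using y by simp
  then have "[x ^ p = x] (mod int p)"
    by (metis (no_types, lifting) cong_def mod_mod_trivial power_mod)
  then show ?thesis by (simp add: cong_iff_dvd_diff)
qed

lemma cheb_p_mod:
  assumes "prime (p::nat)" "odd p"
  shows "int p dvd cheb p x - x^p"
proof -
  define t where "t i = int (p choose i) * x^(p-i) * ev x i" for i
  have "cheb p x = t 0 + (\<Sum>i<p. t (Suc i))"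
    unfolding cheb_binom t_def by (rule sum.atMost_shift)
  moreover have "t 0 = x^p" unfolding t_def ev_def by simp
  moreover have "int p dvd (\<Sum>i<p. t (Suc i))"
  proof (rule dvd_sum)
    fix i assume i: "i \<in> {..<p}"
    show "int p dvd t (Suc i)"
    proof (cases "Suc i = p")
      case True
      then show ?thesis using assms(2) unfolding t_def ev_def by simp
    next
      case False
      then have "p dvd (p choose Suc i)" using i assms(1) by (intro dvd_choose_prime) auto
      then show ?thesis unfolding t_def by (simp add: int_dvd_int_iff[symmetric] del: int_dvd_int_iff)
    qed
  qed
  ultimately show ?thesis by simp
qed

lemma cheb_p1_mod:
  assumes "prime (p::nat)" "odd p"
  shows "int p dvd cheb (Suc p) x - x^(Suc p) - (x^2-1)^(Suc p div 2)"
proof -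
  define t where "t i = int (Suc p choose i) * x^(Suc p-i) * ev x i" for i
  have "cheb (Suc p) x = t 0 + (\<Sum>i<Suc p. t (Suc i))"
    unfolding cheb_binom t_def by (rule sum.atMost_shift)
  also have "\<dots> = t 0 + (\<Sum>i<p. t (Suc i)) + t (Suc p)" by simp
  finally have e: "cheb (Suc p) x = t 0 + (\<Sum>i<p. t (Suc i)) + t (Suc p)" .
  moreover have "t 0 = x^(Suc p)" unfolding t_def ev_def by simp
  moreover have "t (Suc p) = (x^2-1)^(Suc p div 2)" unfolding t_def ev_def using assms(2) by simp
  moreover have "int p dvd (\<Sum>i<p. t (Suc i))"
  proof (rule dvd_sum)
    fix i assume i: "i \<in> {..<p}"
    show "int p dvd t (Suc i)"
    proof (cases "odd (Suc i)")
      case True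
      then show ?thesis unfolding t_def ev_def by simp
    next
      case False
      then have "Suc i \<noteq> p" using assms(2) by auto
      then have si: "Suc i < p" using i by auto
      have "i \<noteq> 0" using False by (auto intro: Nat.gr0I)
      then have "p dvd (p choose i)" "p dvd (p choose Suc i)" using si assms(1) by (auto intro!: dvd_choose_prime)
      then have "p dvd (Suc p choose Suc i)" by simp
      then show ?thesis unfolding t_def by (simp add: int_dvd_int_iff[symmetric] del: int_dvd_int_iff)
    qed
  qed
  ultimately show ?thesis by simp
qed

lemma shiftQ:
  assumes "m dvd cheb Q x - 1" "m dvd cheb (Suc Q) x - x"
  shows "m dvd cheb (Q + j) x - cheb j x"
proof (induction j rule: nat_2induct)
  case 1 then show ?case using assms by simp
next
  case 2 then show ?case using assms by simp
next
  case (3 j)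
  have e: "cheb (Q + Suc (Suc j)) x - cheb (Suc (Suc j)) x
     = 2 * x * (cheb (Q + Suc j) x - cheb (Suc j) x) - (cheb (Q + j) x - cheb j x)"
    by (simp add: algebra_simps)
  show ?case unfolding e using 3 by (meson dvd_diff dvd_mult)
qed

lemma shiftQt:
  assumes "m dvd cheb Q x - 1" "m dvd cheb (Suc Q) x - x"
  shows "m dvd cheb (Q * t + j) x - cheb j x"
proof (induction t)
  case (Suc t)
  have "m dvd cheb (Q + (Q * t + j)) x - cheb (Q * t + j) x" by (rule shiftQ[OF assms])
  then have "m dvd (cheb (Q + (Q * t + j)) x - cheb (Q * t + j) x) + (cheb (Q * t + j) x - cheb j x)"
    using Suc by (rule dvd_add)
  then show ?case by (simp add: algebra_simps)
qed simp

lemma periodQ: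
  assumes p: "prime (p::nat)" "odd p"
  shows "\<exists>Q>0. Q dvd (p^2 - 1) \<and> [cheb Q x = 1] (mod int p) \<and> [cheb (Suc Q) x = x] (mod int p)"
proof -
  define D where "D = x^2 - 1"
  have p3: "p \<ge> 3" using p prime_ge_2_nat[OF p(1)] by (cases "p = 2") auto
  show ?thesis
  proof (cases "int p dvd D")
    case True
    have "2 dvd p^2 - 1" using p(2) by (simp add: even_diff_nat)
    moreover have "[cheb 2 x = 1] (mod int p)"
    proof -
      have "cheb 2 x - 1 = 2 * D" by (simp add: D_def numeral_2_eq_2 power2_eq_square)
      then show ?thesis using True by (simp add: cong_iff_dvd_diff)
    qed
    moreover have "[cheb (Suc 2) x = x] (mod int p)"
    proof -
      have "cheb (Suc 2) x - x = 4 * x * D" by (simp add: D_def numeral_2_eq_2 power2_eq_square algebra_simps)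
      then show ?thesis using True by (simp add: cong_iff_dvd_diff)
    qed
    ultimately show ?thesis by (intro exI[of _ 2]) auto
  next
    case False
    define \<epsilon> where "\<epsilon> = D ^ ((p-1) div 2)"
    obtain q where q: "p = Suc q" using p3 by (cases p) auto
    have qe: "even q" using p(2) q by simp
    have pfac: "p^2 - 1 = (p-1) * Suc p" unfolding q by (simp add: power2_eq_square algebra_simps)
    have pint: "prime (int p)" using p(1) by simp
    have "int p dvd D^p - D" by (rule fermat_int[OF p(1)])
    moreover have "D^p - D = D * (D^(p-1) - 1)" unfolding q by (simp add: algebra_simps)
    ultimately have "int p dvd D * (D^(p-1) - 1)" by simp
    then have "int p dvd D^(p-1) - 1" using False pint prime_dvd_mult_iff by blast
    moreover have "D^(p-1) = \<epsilon> * \<epsilon>"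
    proof -
      have "p - 1 = 2 * ((p-1) div 2)" using qe q by simp
      then have "D^(p-1) = (D^((p-1) div 2))^2" by (metis power_mult mult.commute)
      then show ?thesis unfolding \<epsilon>_def by (simp add: power2_eq_square)
    qed
    ultimately have "int p dvd (\<epsilon> - 1) * (\<epsilon> + 1)" by (simp add: algebra_simps)
    then have "int p dvd \<epsilon> - 1 \<or> int p dvd \<epsilon> + 1" using pint prime_dvd_mult_iff by blast
    then have eps: "[\<epsilon> = 1] (mod int p) \<or> [\<epsilon> = -1] (mod int p)"
      by (simp add: cong_iff_dvd_diff)
    have A: "[cheb p x = x] (mod int p)"
    proof -
      have "[cheb p x = x^p] (mod int p)" using cheb_p_mod[OF p, of x] by (simp add: cong_iff_dvd_diff)
      moreover have "[x^p = x] (mod int p)" using fermat_int[OF p(1), of x] by (simp add: cong_iff_dvd_diff)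
      ultimately show ?thesis using cong_trans by blast
    qed
    have sp: "Suc p div 2 = Suc ((p-1) div 2)" using q qe by auto
    have xp: "[x^(Suc p) = x * x] (mod int p)"
    proof -
      have "int p dvd x * (x^p - x)" using fermat_int[OF p(1), of x] by (rule dvd_mult)
      then show ?thesis by (simp add: cong_iff_dvd_diff algebra_simps)
    qed
    have B0: "[cheb (Suc p) x = x^(Suc p) + D^(Suc p div 2)] (mod int p)"
      using cheb_p1_mod[OF p, of x] unfolding D_def by (simp add: cong_iff_dvd_diff algebra_simps)
    have B: "[cheb (Suc p) x = x * x + D * \<epsilon>] (mod int p)"
    proof -
      have "D^(Suc p div 2) = D * \<epsilon>" unfolding sp \<epsilon>_def by simp
      then have "[x^(Suc p) + D^(Suc p div 2) = x * x + D * \<epsilon>] (mod int p)"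
        using xp by (simp add: cong_add)
      then show ?thesis using B0 cong_trans by blast
    qed
    from eps show ?thesis
    proof
      assume e1: "[\<epsilon> = 1] (mod int p)"
      have B1: "[cheb (Suc p) x = x * x + D] (mod int p)"
      proof -
        have "[x * x + D * \<epsilon> = x * x + D * 1] (mod int p)" using e1 by (intro cong_add cong_mult cong_refl)
        then show ?thesis using B cong_trans by fastforce
      qed
      have rec: "cheb (Suc p) x = 2 * x * cheb p x - cheb (p - 1) x"
        using q by simp
      have "[cheb (p-1) x = 2 * x * cheb p x - cheb (Suc p) x] (mod int p)" using rec by simp
      moreover have "[2 * x * cheb p x - cheb (Suc p) x = 2 * x * x - (x * x + D)] (mod int p)"
        using A B1 by (intro cong_diff cong_mult cong_refl)
      moreover have "2 * x * x - (x * x + D) = 1" unfolding D_def by (simp add: power2_eq_square)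
      ultimately have "[cheb (p-1) x = 1] (mod int p)" using cong_trans by metis
      moreover have "Suc (p-1) = p" using p3 by simp
      moreover have "(p - 1) dvd p^2 - 1" unfolding pfac by (rule dvd_triv_left)
      ultimately show ?thesis using A p3 by (intro exI[of _ "p-1"]) auto
    next
      assume e1: "[\<epsilon> = -1] (mod int p)"
      have B1: "[cheb (Suc p) x = x * x - D] (mod int p)"
      proof -
        have "[x * x + D * \<epsilon> = x * x + D * (-1)] (mod int p)" using e1 by (intro cong_add cong_mult cong_refl)
        then show ?thesis using B cong_trans by fastforce
      qed
      then have C1: "[cheb (Suc p) x = 1] (mod int p)" unfolding D_def by (simp add: power2_eq_square)
      have "cheb (Suc (Suc p)) x = 2 * x * cheb (Suc p) x - cheb p x" by simp
      moreover have "[2 * x * cheb (Suc p) x - cheb p x = 2 * x * 1 - x] (mod int p)"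
        using A C1 by (intro cong_diff cong_mult cong_refl)
      ultimately have "[cheb (Suc (Suc p)) x = x] (mod int p)" by simp
      moreover have "Suc p dvd p^2 - 1" unfolding pfac by (rule dvd_triv_right)
      ultimately show ?thesis using C1 by (intro exI[of _ "Suc p"]) auto
    qed
  qed
qed

lemma inj_mod_p:
  assumes p: "prime (p::nat)" "odd p" and cop: "coprime n (p^2 - 1)"
    and h: "[cheb n x = cheb n y] (mod int p)"
  shows "[x = y] (mod int p)"
proof -
  define P where "P = p^2 - 1"
  have p3: "p \<ge> 3" using p prime_ge_2_nat[OF p(1)] by (cases "p = 2") auto
  have "p^2 \<ge> 3^2" using p3 by (rule power_mono) simp
  then have P1: "P > 1" unfolding P_def by simp
  obtain m where m: "[n * m = Suc 0] (mod P)" using cong_solve_coprime_nat cop P_def by blast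
  have nm: "n * m = P * (n * m div P) + 1"
  proof -
    have "n * m mod P = 1" using m P1 by (simp add: cong_def)
    then show ?thesis using div_mult_mod_eq[of "n*m" P] by (simp add: mult.commute)
  qed
  have inv: "[cheb m (cheb n z) = z] (mod int p)" for z
  proof -
    obtain Q where Q: "Q > 0" "Q dvd P" "[cheb Q z = 1] (mod int p)" "[cheb (Suc Q) z = z] (mod int p)"
      using periodQ[OF p, of z] P_def by blast
    obtain r where r: "P = Q * r" using Q(2) by blast
    have "int p dvd cheb (Q * (r * (n * m div P)) + 1) z - cheb 1 z"
      by (rule shiftQt) (use Q in \<open>auto simp: cong_iff_dvd_diff\<close>)
    moreover have "Q * (r * (n * m div P)) + 1 = m * n" using nm r by (simp add: mult.assoc mult.commute)
    ultimately show ?thesis by (simp add: cheb_comp cong_iff_dvd_diff)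
  qed
  have "[cheb m (cheb n x) = cheb m (cheb n y)] (mod int p)"
    using h cheb_cong by (simp add: cong_iff_dvd_diff)
  then have "[x = cheb m (cheb n y)] (mod int p)" using cong_sym[OF inv[of x]] cong_trans by blast
  then show ?thesis using inv[of y] cong_trans by blast
qed

lemma n_odd:
  assumes p: "prime (p::nat)" "odd p" and cop: "coprime n (p^2 - 1)"
  shows "odd n"
proof
  assume "even n"
  moreover have "even (p^2 - 1)" using p(2) by (simp add: even_diff_nat)
  ultimately have "is_unit (2::nat)" using cop coprime_common_divisor by blast
  then show False by simp
qed

lemma chd_nonzero:
  assumes p: "prime (p::nat)" "odd p" and cop: "coprime n (p^2 - 1)" and np: "\<not> p dvd n"
  shows "\<not> int p dvd chd n x"
proof
  assume a: "int p dvd chd n x"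
  have pint: "prime (int p)" using p(1) by simp
  have npi: "\<not> int p dvd int n" using np by simp
  have V: "int p dvd chebV n x" using a npi pint prime_dvd_mult_iff unfolding chd_def by blast
  have no: "odd n" by (rule n_odd[OF p cop])
  have "int p dvd (x^2-1) * chebV n x ^ 2" using V by (simp add: power2_eq_square)
  moreover have "cheb n x ^ 2 - 1 = (x^2-1) * chebV n x ^ 2" using pell[of n x] by linarith
  ultimately have "int p dvd cheb n x ^ 2 - 1" by simp
  then have "int p dvd (cheb n x - 1) * (cheb n x + 1)" by (simp add: power2_eq_square algebra_simps)
  then have "int p dvd cheb n x - 1 \<or> int p dvd cheb n x + 1" using pint prime_dvd_mult_iff by blast
  then show False
  proof
    assume "int p dvd cheb n x - 1"
    then have "[cheb n x = cheb n 1] (mod int p)" by (simp add: cong_iff_dvd_diff)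
    then have "[x = 1] (mod int p)" by (rule inj_mod_p[OF p cop])
    then have "int p dvd chebV n x - chebV n 1" using chebV_cong by (simp add: cong_iff_dvd_diff)
    then have "int p dvd chebV n x - (chebV n x - chebV n 1)" using V by (rule dvd_diff[rotated])
    then have "int p dvd int n" by (simp add: chebV_1)
    then show False using npi by simp
  next
    assume "int p dvd cheb n x + 1"
    then have "[cheb n x = cheb n (-1)] (mod int p)" using no by (simp add: cong_iff_dvd_diff cheb_m1)
    then have "[x = -1] (mod int p)" by (rule inj_mod_p[OF p cop])
    then have "int p dvd chebV n x - chebV n (-1)" using chebV_cong by (simp add: cong_iff_dvd_diff)
    moreover have "chebV n (-1) = int n" using no by (simp add: chebV_m1)
    ultimately have "int p dvd chebV n x - int n" by simp
    then have "int p dvd chebV n x - (chebV n x - int n)" using V by (rule dvd_diff[rotated])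
    then have "int p dvd int n" by simp
    then show False using npi by simp
  qed
qed



locale chs =
  fixes p :: nat and n :: nat
  assumes prime_p: "prime p" and p_gt: "p > 3" and np: "\<not> p dvd n" and cop: "coprime n (p^2-1)"
begin

lemma odd_p: "odd p"
  using prime_p p_gt by (intro prime_odd_nat) auto

lemma pint: "prime (int p)" using prime_p by simp

lemma p_pos: "int p > 1" using p_gt by simp

lemma injk: "[cheb n x = cheb n y] (mod int p ^ k) \<Longrightarrow> [x = y] (mod int p ^ k)"
proof (induction k arbitrary: x y)
  case 0 then show ?case by simp
next
  case (Suc k)
  show ?case
  proof (cases "k = 0")
    case True
    then show ?thesis using Suc.prems inj_mod_p[OF prime_p odd_p cop] by simp
  next
    case False
    have "[cheb n x = cheb n y] (mod int p ^ k)"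
      using Suc.prems by (rule cong_dvd_modulus) (simp add: le_imp_power_dvd)
    then have "[x = y] (mod int p ^ k)" by (rule Suc.IH)
    then have "int p ^ k dvd y - x" by (simp add: cong_iff_dvd_diff dvd_diff_commute)
    then obtain t where t0: "y - x = int p ^ k * t" by (elim dvdE)
    then have t: "y = x + int p ^ k * t" by simp
    obtain k0 where k0: "k = Suc k0" using False by (cases k) auto
    have h2: "(int p ^ k * t)^2 = int p ^ Suc k * (int p ^ k0 * t^2)"
      unfolding k0 by (simp add: power2_eq_square algebra_simps)
    have "(int p ^ k * t)^2 dvd cheb n y - cheb n x - int p ^ k * t * chd n x"
      using taylor1[of "int p ^ k * t" n x] t by simp
    then have d1: "int p ^ Suc k dvd cheb n y - cheb n x - int p ^ k * t * chd n x"
      unfolding h2 using dvd_mult_left by blast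
    have d2: "int p ^ Suc k dvd cheb n y - cheb n x"
      using Suc.prems by (simp add: cong_iff_dvd_diff dvd_diff_commute)
    have "int p ^ Suc k dvd (cheb n y - cheb n x) - (cheb n y - cheb n x - int p ^ k * t * chd n x)"
      using d2 d1 by (rule dvd_diff)
    then have "int p ^ k * int p dvd int p ^ k * (t * chd n x)" by (simp add: mult.commute mult.left_commute)
    then have "int p dvd t * chd n x" using p_pos by (subst (asm) dvd_mult_cancel_left) auto
    moreover have "\<not> int p dvd chd n x" by (rule chd_nonzero[OF prime_p odd_p cop np])
    ultimately have "int p dvd t" using pint prime_dvd_mult_iff by blast
    then have "int p ^ Suc k dvd int p ^ k * t" by (simp add: mult.commute)
    then have "int p ^ Suc k dvd y - x" using t0 by simp
    then show ?thesis by (subst cong_iff_dvd_diff) (simp only: dvd_diff_commute)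
  qed
qed

lemma comp_pow: "cheb (n^i) (cheb (n^j) x) = cheb (n^(i+j)) x"
  by (simp add: cheb_comp power_add)

lemma cheb_congr: "[x = y] (mod m) \<Longrightarrow> [cheb j x = cheb j y] (mod m)"
  using cheb_cong by (simp add: cong_iff_dvd_diff)

lemma injk_pow: "[cheb (n^i) x = cheb (n^i) y] (mod int p ^ k) \<Longrightarrow> [x = y] (mod int p ^ k)"
proof (induction i arbitrary: x y)
  case 0 then show ?case by simp
next
  case (Suc i)
  have "cheb (n ^ Suc i) z = cheb n (cheb (n^i) z)" for z by (simp add: cheb_comp)
  then have "[cheb n (cheb (n^i) x) = cheb n (cheb (n^i) y)] (mod int p ^ k)" using Suc.prems by simp
  then have "[cheb (n^i) x = cheb (n^i) y] (mod int p ^ k)" by (rule injk)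
  then show ?case by (rule Suc.IH)
qed

lemma period_exists: "\<exists>L>0. [cheb (n^L) x = x] (mod int p ^ k)"
proof -
  define M where "M = p^k"
  define f where "f i = cheb (n^i) x mod int p ^ k" for i
  have "f ` {..M} \<subseteq> {0..<int M}" unfolding f_def M_def using p_pos by auto
  then have "card (f ` {..M}) \<le> card {0..<int M}" by (intro card_mono) auto
  then have "card (f ` {..M}) < card {..M}" by simp
  then have "\<not> inj_on f {..M}" by (rule pigeonhole)
  then obtain i j where ij: "i \<le> M" "j \<le> M" "i \<noteq> j" "f i = f j" unfolding inj_on_def by auto
  have main: "\<exists>L>0. [cheb (n^L) x = x] (mod int p ^ k)" if "i < j" "f i = f j" for i j
  proof -
    have "cheb (n^j) x = cheb (n^i) (cheb (n^(j-i)) x)" using that by (simp add: comp_pow)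
    then have "[cheb (n^i) (cheb (n^(j-i)) x) = cheb (n^i) x] (mod int p ^ k)"
      using that unfolding f_def by (simp add: cong_def)
    then have "[cheb (n^(j-i)) x = x] (mod int p ^ k)" by (rule injk_pow)
    then show ?thesis using that by (intro exI[of _ "j - i"]) auto
  qed
  show ?thesis
  proof (cases "i < j")
    case True then show ?thesis using main ij by blast
  next
    case False then have "j < i" using ij by auto
    then show ?thesis using main ij by metis
  qed
qed

definition per :: "nat \<Rightarrow> int \<Rightarrow> nat" where
  "per k x = (LEAST L. L > 0 \<and> [cheb (n^L) x = x] (mod int p ^ k))"

lemma per: "per k x > 0" "[cheb (n^(per k x)) x = x] (mod int p ^ k)"
proof -
  have "per k x > 0 \<and> [cheb (n^(per k x)) x = x] (mod int p ^ k)"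
    unfolding per_def using period_exists by (rule LeastI_ex)
  then show "per k x > 0" "[cheb (n^(per k x)) x = x] (mod int p ^ k)" by auto
qed

lemma per_min: "0 < L \<Longrightarrow> L < per k x \<Longrightarrow> \<not> [cheb (n^L) x = x] (mod int p ^ k)"
  unfolding per_def using not_less_Least by blast

lemma iter_mult: "[cheb (n^L) x = x] (mod m) \<Longrightarrow> [cheb (n^(L*t)) x = x] (mod m)"
proof (induction t)
  case 0 then show ?case by simp
next
  case (Suc t)
  have "cheb (n^(L * Suc t)) x = cheb (n^L) (cheb (n^(L*t)) x)" by (simp add: comp_pow)
  moreover have "[cheb (n^L) (cheb (n^(L*t)) x) = cheb (n^L) x] (mod m)"
    using Suc by (intro cheb_congr) auto
  ultimately show ?case using Suc.prems cong_trans by metis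
qed

lemma reduce_mod: "[cheb (n^L) x = x] (mod m) \<Longrightarrow> [cheb (n^M) x = cheb (n^(M mod L)) x] (mod m)"
proof -
  assume a: "[cheb (n^L) x = x] (mod m)"
  have "cheb (n^M) x = cheb (n^(M mod L)) (cheb (n^(L * (M div L))) x)"
    by (simp add: comp_pow)
  moreover have "[cheb (n^(M mod L)) (cheb (n^(L * (M div L))) x) = cheb (n^(M mod L)) x] (mod m)"
    by (intro cheb_congr iter_mult a)
  ultimately show ?thesis by simp
qed

lemma per_dvd: "[cheb (n^M) x = x] (mod int p ^ k) \<longleftrightarrow> per k x dvd M"
proof
  assume a: "[cheb (n^M) x = x] (mod int p ^ k)"
  have "[cheb (n^(M mod per k x)) x = cheb (n^M) x] (mod int p ^ k)"
    using reduce_mod[OF per(2)] by (simp add: cong_sym)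
  then have "[cheb (n^(M mod per k x)) x = x] (mod int p ^ k)" using a cong_trans by blast
  moreover have "M mod per k x < per k x" using per(1) by simp
  ultimately have "M mod per k x = 0" using per_min by blast
  then show "per k x dvd M" by auto
next
  assume "per k x dvd M"
  then obtain t where "M = per k x * t" by blast
  then show "[cheb (n^M) x = x] (mod int p ^ k)" using iter_mult[OF per(2)] by simp
qed

lemma per_cong: "[x = y] (mod int p ^ k) \<Longrightarrow> per k x = per k y"
proof -
  assume a: "[x = y] (mod int p ^ k)"
  have "[cheb (n^L) x = x] (mod int p ^ k) \<longleftrightarrow> [cheb (n^L) y = y] (mod int p ^ k)" for L
  proof -
    have "[cheb (n^L) x = cheb (n^L) y] (mod int p ^ k)" using a by (rule cheb_congr)
    then show ?thesis using a by (meson cong_sym cong_trans)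
  qed
  then show ?thesis unfolding per_def by simp
qed

lemma per_iter: "per k (cheb (n^i) x) = per k x"
proof -
  have "[cheb (n^L) (cheb (n^i) x) = cheb (n^i) x] (mod int p ^ k) \<longleftrightarrow> [cheb (n^L) x = x] (mod int p ^ k)" for L
  proof
    assume "[cheb (n^L) (cheb (n^i) x) = cheb (n^i) x] (mod int p ^ k)"
    then have "[cheb (n^i) (cheb (n^L) x) = cheb (n^i) x] (mod int p ^ k)" by (simp add: comp_pow add.commute)
    then show "[cheb (n^L) x = x] (mod int p ^ k)" by (rule injk_pow)
  next
    assume "[cheb (n^L) x = x] (mod int p ^ k)"
    then have "[cheb (n^i) (cheb (n^L) x) = cheb (n^i) x] (mod int p ^ k)" by (rule cheb_congr)
    then show "[cheb (n^L) (cheb (n^i) x) = cheb (n^i) x] (mod int p ^ k)" by (simp add: comp_pow add.commute)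
  qed
  then show ?thesis unfolding per_def by simp
qed

lemma per_dvd_Suc: "per k x dvd per (Suc k) x"
proof -
  have "[cheb (n^(per (Suc k) x)) x = x] (mod int p ^ k)"
    using per(2)[of "Suc k" x] by (rule cong_dvd_modulus) (simp add: le_imp_power_dvd)
  then show ?thesis using per_dvd by blast
qed

lemma cm_iter: "x \<in> {0..<int p ^ k} \<Longrightarrow> (cheb_map (int p) n k ^^ i) x = cheb (n^i) x mod int p ^ k"
proof (induction i)
  case 0 then show ?case by simp
next
  case (Suc i)
  have "(cheb_map (int p) n k ^^ Suc i) x = cheb_map (int p) n k ((cheb_map (int p) n k ^^ i) x)" by simp
  also have "\<dots> = cheb n (cheb (n^i) x mod int p ^ k) mod int p ^ k"
    using Suc by (simp only:) (simp add: cheb_map_def)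
  also have "\<dots> = cheb n (cheb (n^i) x) mod int p ^ k"
    using cheb_congr[of "cheb (n^i) x mod int p ^ k" "cheb (n^i) x" "int p ^ k" n]
    by (simp add: cong_def)
  also have "\<dots> = cheb (n^Suc i) x mod int p ^ k" by (simp add: cheb_comp)
  finally show ?case .
qed

lemma orbit_range: "x \<in> {0..<int p ^ k} \<Longrightarrow> cycle_of (int p) n k x = range (\<lambda>i. cheb (n^i) x mod int p ^ k)"
  unfolding cycle_of_def using cm_iter by auto

lemma orbit_img: "x \<in> {0..<int p ^ k} \<Longrightarrow> cycle_of (int p) n k x = (\<lambda>i. cheb (n^i) x mod int p ^ k) ` {..<per k x}"
proof -
  assume x: "x \<in> {0..<int p ^ k}"
  have "range (\<lambda>i. cheb (n^i) x mod int p ^ k) \<subseteq> (\<lambda>i. cheb (n^i) x mod int p ^ k) ` {..<per k x}"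
  proof
    fix y assume "y \<in> range (\<lambda>i. cheb (n^i) x mod int p ^ k)"
    then obtain i where y: "y = cheb (n^i) x mod int p ^ k" by auto
    have "[cheb (n^i) x = cheb (n^(i mod per k x)) x] (mod int p ^ k)" by (rule reduce_mod[OF per(2)])
    then have "y = cheb (n^(i mod per k x)) x mod int p ^ k" using y by (simp add: cong_def)
    moreover have "i mod per k x < per k x" using per(1) by simp
    ultimately show "y \<in> (\<lambda>i. cheb (n^i) x mod int p ^ k) ` {..<per k x}" by auto
  qed
  then show ?thesis using orbit_range[OF x] by auto
qed

lemma orbit_card: "x \<in> {0..<int p ^ k} \<Longrightarrow> card (cycle_of (int p) n k x) = per k x"
proof -
  assume x: "x \<in> {0..<int p ^ k}"
  have "inj_on (\<lambda>i. cheb (n^i) x mod int p ^ k) {..<per k x}"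
  proof (rule ccontr)
    assume "\<not> ?thesis"
    then obtain i j where ij: "i < per k x" "j < per k x" "i \<noteq> j"
      "cheb (n^i) x mod int p ^ k = cheb (n^j) x mod int p ^ k" unfolding inj_on_def by auto
    have main: False if "i < j" "j < per k x" "cheb (n^i) x mod int p ^ k = cheb (n^j) x mod int p ^ k" for i j
    proof -
      have "cheb (n^j) x = cheb (n^i) (cheb (n^(j-i)) x)" using that by (simp add: comp_pow)
      then have "[cheb (n^i) (cheb (n^(j-i)) x) = cheb (n^i) x] (mod int p ^ k)"
        using that by (simp add: cong_def)
      then have "[cheb (n^(j-i)) x = x] (mod int p ^ k)" by (rule injk_pow)
      moreover have "0 < j - i" "j - i < per k x" using that by auto
      ultimately show False using per_min by blast
    qed
    show False
    proof (cases "i < j")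
      case True then show False using main ij by blast
    next
      case False then have "j < i" using ij by auto
      then show False using main[of j i] ij by auto
    qed
  qed
  then show ?thesis using orbit_img[OF x] by (simp add: card_image)
qed

lemma orbit_sub: "cycle_of (int p) n k x \<subseteq> {0..<int p ^ k} \<or> x \<notin> {0..<int p ^ k}"
  using orbit_range p_pos by auto

lemma orbit_sub': "x \<in> {0..<int p ^ k} \<Longrightarrow> cycle_of (int p) n k x \<subseteq> {0..<int p ^ k}"
  using orbit_sub by blast

lemma per1_le: "per 1 x \<le> p"
proof -
  define y where "y = x mod int p"
  have y: "y \<in> {0..<int p ^ 1}" unfolding y_def using p_pos by auto
  have "per 1 y = per 1 x" unfolding y_def by (rule per_cong) (simp add: cong_def)
  moreover have "card (cycle_of (int p) n 1 y) \<le> card {0..<int p ^ 1}"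
    using orbit_sub'[OF y] by (intro card_mono) auto
  ultimately show ?thesis using orbit_card[OF y] by simp
qed

lemma lin: "1 \<le> k \<Longrightarrow> int p ^ Suc k dvd cheb N (x + int p ^ k * t) - cheb N x - int p ^ k * t * chd N x"
proof -
  assume k: "1 \<le> k"
  obtain k0 where k0: "k = Suc k0" using k by (cases k) auto
  have h2: "(int p ^ k * t)^2 = int p ^ Suc k * (int p ^ k0 * t^2)"
    unfolding k0 by (simp add: power2_eq_square algebra_simps)
  have "(int p ^ k * t)^2 dvd cheb N (x + int p ^ k * t) - cheb N x - int p ^ k * t * chd N x"
    by (rule taylor1)
  then show ?thesis unfolding h2 using dvd_mult_left by blast
qed

lemma chain: "[chd (A*B) x = chd A (cheb B x) * chd B x] (mod int p)"
proof -
  define q where "q = int p"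
  have d1: "q^2 dvd cheb B (x + q) - cheb B x - q * chd B x"
    using lin[of 1 B x 1] unfolding q_def by (simp add: power2_eq_square)
  then obtain r where r: "cheb B (x + q) - cheb B x - q * chd B x = q^2 * r" by (elim dvdE)
  define u where "u = chd B x + q * r"
  have bu: "cheb B (x + q) = cheb B x + q * u" using r unfolding u_def by (simp add: algebra_simps power2_eq_square)
  have d2: "q^2 dvd cheb A (cheb B x + q * u) - cheb A (cheb B x) - q * u * chd A (cheb B x)"
    using lin[of 1 A "cheb B x" u] unfolding q_def by (simp add: power2_eq_square)
  have d3: "q^2 dvd cheb (A*B) (x + q) - cheb (A*B) x - q * chd (A*B) x"
    using lin[of 1 "A*B" x 1] unfolding q_def by (simp add: power2_eq_square)
  have e: "cheb (A*B) z = cheb A (cheb B z)" for z by (simp add: cheb_comp)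
  have "q^2 dvd (cheb A (cheb B x + q * u) - cheb A (cheb B x) - q * u * chd A (cheb B x))
      - (cheb (A*B) (x + q) - cheb (A*B) x - q * chd (A*B) x)" using d2 d3 by (rule dvd_diff)
  moreover have "(cheb A (cheb B x + q * u) - cheb A (cheb B x) - q * u * chd A (cheb B x))
      - (cheb (A*B) (x + q) - cheb (A*B) x - q * chd (A*B) x)
      = q * (chd (A*B) x - chd A (cheb B x) * chd B x) - q^2 * (r * chd A (cheb B x))"
  proof -
    have E1: "cheb A (cheb B x + q * u) = cheb (A*B) (x + q)" using bu e by simp
    show ?thesis unfolding E1 by (simp add: u_def e algebra_simps power2_eq_square)
  qed
  ultimately have "q^2 dvd q * (chd (A*B) x - chd A (cheb B x) * chd B x) - q^2 * (r * chd A (cheb B x))" by simp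
  then have "q^2 dvd q * (chd (A*B) x - chd A (cheb B x) * chd B x)"
    by (metis dvd_add_left_iff dvd_triv_left diff_add_cancel)
  then have "q * q dvd q * (chd (A*B) x - chd A (cheb B x) * chd B x)" by (simp add: power2_eq_square)
  then have "q dvd chd (A*B) x - chd A (cheb B x) * chd B x" using p_pos q_def by simp
  then show ?thesis unfolding q_def by (simp add: cong_iff_dvd_diff)
qed

lemma iterN: "[cheb N x = x] (mod m) \<Longrightarrow> [cheb (N^j) x = x] (mod m)"
proof (induction j)
  case 0 then show ?case by simp
next
  case (Suc j)
  have "cheb (N^Suc j) x = cheb N (cheb (N^j) x)" by (simp add: cheb_comp)
  moreover have "[cheb N (cheb (N^j) x) = cheb N x] (mod m)" using Suc by (intro cheb_congr) auto
  ultimately show ?case using Suc.prems cong_trans by metis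
qed

lemma chd_congr: "[x = y] (mod m) \<Longrightarrow> [chd j x = chd j y] (mod m)"
  using chd_cong by (simp add: cong_iff_dvd_diff)

lemma chd_pow_cong: "[cheb N x = x] (mod int p) \<Longrightarrow> [chd (N^m) x = chd N x ^ m] (mod int p)"
proof (induction m)
  case 0 then show ?case by (simp add: chd_def)
next
  case (Suc m)
  have "[chd (N * N^m) x = chd N (cheb (N^m) x) * chd (N^m) x] (mod int p)" by (rule chain)
  moreover have "[chd N (cheb (N^m) x) * chd (N^m) x = chd N x * chd N x ^ m] (mod int p)"
    using Suc iterN[OF Suc.prems, of m] by (intro cong_mult chd_congr) auto
  ultimately show ?case using cong_trans by fastforce
qed

lemma chd_pow_nz: "\<not> int p dvd chd (n^L) x"
proof (induction L arbitrary: x)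
  case 0 then show ?case using p_gt by (simp add: chd_def)
next
  case (Suc L)
  have c: "[chd (n * n^L) x = chd n (cheb (n^L) x) * chd (n^L) x] (mod int p)" by (rule chain)
  have "\<not> int p dvd chd n (cheb (n^L) x) * chd (n^L) x"
    using Suc.IH chd_nonzero[OF prime_p odd_p cop np] pint prime_dvd_mult_iff by blast
  then show ?case using c by (simp add: cong_dvd_iff)
qed

lemma affine:
  assumes k: "1 \<le> k" and c: "cheb N x = x + int p ^ k * c"
  shows "\<exists>s. cheb (N^m) x = x + int p ^ k * s \<and> [s = c * (\<Sum>i<m. chd N x ^ i)] (mod int p)"
proof (induction m)
  case 0 then show ?case by (intro exI[of _ 0]) simp
next
  case (Suc m)
  then obtain s where s: "cheb (N^m) x = x + int p ^ k * s" "[s = c * (\<Sum>i<m. chd N x ^ i)] (mod int p)" by blast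
  have "int p ^ Suc k dvd cheb N (x + int p ^ k * s) - cheb N x - int p ^ k * s * chd N x" by (rule lin[OF k])
  then obtain r where r: "cheb N (x + int p ^ k * s) - cheb N x - int p ^ k * s * chd N x = int p ^ Suc k * r"
    by (elim dvdE)
  have "cheb (N^Suc m) x = cheb N (cheb (N^m) x)" by (simp add: cheb_comp)
  also have "\<dots> = x + int p ^ k * (c + s * chd N x + int p * r)"
    using r c s(1) by (simp add: algebra_simps)
  finally have e: "cheb (N^Suc m) x = x + int p ^ k * (c + s * chd N x + int p * r)" .
  have "[c + s * chd N x + int p * r = c + c * (\<Sum>i<m. chd N x ^ i) * chd N x + 0] (mod int p)"
    using s(2) by (intro cong_add cong_mult cong_refl) (auto simp: cong_def)
  moreover have "c + c * (\<Sum>i<m. chd N x ^ i) * chd N x + 0 = c * (\<Sum>i<Suc m. chd N x ^ i)"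
  proof -
    have "(\<Sum>i<Suc m. chd N x ^ i) = 1 + chd N x * (\<Sum>i<m. chd N x ^ i)"
      by (simp only: sum.lessThan_Suc_shift) (simp add: sum_distrib_left)
    then show ?thesis by (simp add: algebra_simps)
  qed
  ultimately show ?case using e by auto
qed

lemma S1_eq: "2 * (\<Sum>i<j. int i) = int j * (int j - 1)"
  by (induction j) (auto simp: algebra_simps)

lemma S2_eq: "6 * (\<Sum>i<j. int i ^ 2) = int j * (int j - 1) * (2 * int j - 1)"
  by (induction j) (auto simp: algebra_simps power2_eq_square)

lemma p_dvd_S1: "int p dvd (\<Sum>i<p. int i)"
proof -
  have "int p dvd 2 * (\<Sum>i<p. int i)" unfolding S1_eq by simp
  moreover have "\<not> int p dvd 2" using p_gt by (auto dest: zdvd_imp_le)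
  ultimately show ?thesis using pint prime_dvd_mult_iff by blast
qed

lemma p_dvd_S2: "int p dvd (\<Sum>i<p. int i ^ 2)"
proof -
  have "int p dvd 2 * (3 * (\<Sum>i<p. int i ^ 2))" using S2_eq[of p] by (simp add: mult.assoc[symmetric])
  moreover have "\<not> int p dvd 2" "\<not> int p dvd 3" using p_gt by (auto dest: zdvd_imp_le)
  ultimately show ?thesis using pint prime_dvd_mult_iff by blast
qed

lemma lemmaA:
  assumes k: "1 \<le> k" and c: "cheb N x = x + int p ^ k * c" and nc: "\<not> int p dvd c"
    and a1: "[chd N x = 1] (mod int p)"
  shows "\<not> int p ^ (k+2) dvd cheb (N^p) x - x"
proof
  assume contra: "int p ^ (k+2) dvd cheb (N^p) x - x"
  define q where "q = int p"
  obtain k0 where k0: "k = Suc k0" using k by (cases k) auto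
  define qk where "qk = q ^ k0"
  have qk_eq: "q ^ k = q * qk" unfolding qk_def k0 by simp
  obtain \<delta> where \<delta>: "chd N x = 1 + q * \<delta>" using a1 unfolding q_def
    by (metis cong_iff_lin cong_sym)
  define e where "e = che N x"
  define S1 where "S1 j = (\<Sum>i<j. int i)" for j
  define S2 where "S2 j = (\<Sum>i<j. int i ^ 2)" for j
  define F where "F j = \<delta> * c * S1 j + qk * e * c^2 * S2 j" for j
  define E where "E j = int j * c + q * F j" for j
  have claim: "\<exists>w. cheb (N^j) x = x + q^k * w \<and> q^2 dvd w - E j" for j
  proof (induction j)
    case 0 then show ?case by (intro exI[of _ 0]) (simp add: E_def F_def S1_def S2_def)
  next
    case (Suc j)
    then obtain w where w: "cheb (N^j) x = x + q^k * w" "q^2 dvd w - E j" by blast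
    obtain Z where Z: "w = E j + q^2 * Z" using w(2) by (metis dvdE diff_add_cancel add.commute)
    define u where "u = q^k * w"
    have "u^3 dvd cheb N (x + u) - cheb N x - u * chd N x - u^2 * che N x" by (rule taylor2)
    moreover have "q^(k+2) dvd u^3"
    proof -
      have ex: "Suc k0 * 3 = (Suc k0 + 2) + 2 * k0" by simp
      have "(q^k)^3 = q^(k * 3)" by (simp add: power_mult)
      also have "\<dots> = q^(k+2) * q^(2*k0)" unfolding k0 ex by (simp only: power_add)
      finally have "u^3 = q^(k+2) * (q^(2*k0) * w^3)" unfolding u_def by (simp add: power_mult_distrib)
      then show ?thesis by simp
    qed
    ultimately have "q^(k+2) dvd cheb N (x + u) - cheb N x - u * chd N x - u^2 * che N x"
      using dvd_trans by blast
    then obtain R where R: "cheb N (x + u) - cheb N x - u * chd N x - u^2 * che N x = q^(k+2) * R"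
      by (elim dvdE)
    define w' where "w' = c + w * chd N x + q^k * w^2 * e + q^2 * R"
    have "cheb (N^Suc j) x = cheb N (cheb (N^j) x)" by (simp add: cheb_comp)
    also have "\<dots> = cheb N (x + u)" using w(1) u_def by simp
    also have "\<dots> = x + q^k * w'"
      using R c unfolding w'_def u_def e_def q_def by (simp add: algebra_simps power2_eq_square power_add)
    finally have ew: "cheb (N^Suc j) x = x + q^k * w'" .
    have S1s: "S1 (Suc j) = S1 j + int j" unfolding S1_def by simp
    have S2s: "S2 (Suc j) = S2 j + int j ^ 2" unfolding S2_def by simp
    have ES: "E (Suc j) = E j + c + q * (\<delta> * c * int j + qk * e * c^2 * int j ^ 2)"
      unfolding E_def F_def S1s S2s by (simp add: algebra_simps)
    have Ej: "E j = int j * c + q * F j" unfolding E_def by simp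
    have "w' - E (Suc j) = q^2 * (\<delta> * F j + qk * e * F j * (E j + int j * c) + Z * (1 + q * \<delta>)
        + q * qk * e * (2 * Z * E j + q^2 * Z^2) + R)"
      unfolding w'_def ES Z \<delta> qk_eq
      by (simp add: Ej algebra_simps power2_eq_square)
    then have "q^2 dvd w' - E (Suc j)" by simp
    then show ?case using ew by blast
  qed
  obtain w where w: "cheb (N^p) x = x + q^k * w" "q^2 dvd w - E p" using claim by blast
  have "q dvd F p" unfolding F_def S1_def S2_def q_def using p_dvd_S1 p_dvd_S2 by simp
  then have "q^2 dvd q * F p" by (simp add: power2_eq_square)
  with w(2) have "q^2 dvd (w - E p) + q * F p" by (rule dvd_add)
  then have A1: "q^2 dvd w - q * c" unfolding E_def q_def by (simp add: algebra_simps)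
  have "q^(k+2) dvd q^k * w" using contra w(1) q_def by simp
  then have "q^k * q^2 dvd q^k * w" by (simp only: power_add)
  then have A2: "q^2 dvd w" using p_pos q_def by (simp add: power2_eq_square)
  have "q^2 dvd w - (w - q * c)" using A2 A1 by (rule dvd_diff)
  then have "q^2 dvd q * c" by simp
  then have "q * q dvd q * c" by (simp add: power2_eq_square)
  then have "q dvd c" using p_pos q_def by simp
  then show False using nc q_def by simp
qed

definition cdef :: "nat \<Rightarrow> int \<Rightarrow> int" where
  "cdef k x = (cheb (n^(per k x)) x - x) div int p ^ k"

lemma cdef: "cheb (n^(per k x)) x = x + int p ^ k * cdef k x"
proof -
  have "int p ^ k dvd cheb (n^(per k x)) x - x" using per(2) by (simp add: cong_iff_dvd_diff)
  then show ?thesis unfolding cdef_def by (simp add: dvd_mult_div_cancel)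
qed

definition good :: "nat \<Rightarrow> int \<Rightarrow> bool" where
  "good k x \<longleftrightarrow> [chd (n^(per k x)) x = 1] (mod int p) \<and> \<not> [cheb (n^(per k x)) x = x] (mod int p ^ Suc k)"

lemma pk_dvd_iff: "int p ^ Suc k dvd int p ^ k * s \<longleftrightarrow> int p dvd s"
proof -
  have "int p ^ Suc k = int p ^ k * int p" by simp
  then show ?thesis using p_pos by simp
qed

lemma char:
  assumes k: "1 \<le> k"
  shows "[cheb (n^(per k x * m)) x = x] (mod int p ^ Suc k) \<longleftrightarrow>
         int p dvd cdef k x * (\<Sum>i<m. chd (n^per k x) x ^ i)"
proof -
  obtain s where s: "cheb ((n^per k x)^m) x = x + int p ^ k * s"
    "[s = cdef k x * (\<Sum>i<m. chd (n^per k x) x ^ i)] (mod int p)"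
    using affine[OF k cdef] by blast
  have "[cheb (n^(per k x * m)) x = x] (mod int p ^ Suc k) \<longleftrightarrow> int p ^ Suc k dvd int p ^ k * s"
    using s(1) by (simp add: power_mult cong_iff_dvd_diff)
  also have "\<dots> \<longleftrightarrow> int p dvd s" by (rule pk_dvd_iff)
  also have "\<dots> \<longleftrightarrow> int p dvd cdef k x * (\<Sum>i<m. chd (n^per k x) x ^ i)"
    using s(2) by (simp add: cong_dvd_iff)
  finally show ?thesis .
qed

lemma sum_cong1: "[a = 1] (mod q) \<Longrightarrow> [(\<Sum>i<m. a ^ i) = int m] (mod q)"
proof -
  assume a: "[a = 1] (mod q)"
  have "[(\<Sum>i<m. a ^ i) = (\<Sum>i<m. 1 ^ i)] (mod q)" using a by (intro cong_sum cong_pow)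
  then show ?thesis by simp
qed

lemma fermat_a: "\<not> int p dvd a \<Longrightarrow> int p dvd a^(p-1) - 1"
proof -
  assume na: "\<not> int p dvd a"
  have "int p dvd a^p - a" by (rule fermat_int[OF prime_p])
  moreover have "a^p - a = a * (a^(p-1) - 1)" using p_gt
    by (cases p) (auto simp: algebra_simps)
  ultimately show ?thesis using na pint prime_dvd_mult_iff by metis
qed

lemma geo_pm1:
  assumes "\<not> [a = 1] (mod int p)" "\<not> int p dvd a"
  shows "int p dvd (\<Sum>i<p-1. a ^ i)"
proof -
  have "int p dvd (a - 1) * (\<Sum>i<p-1. a ^ i)" using fermat_a[OF assms(2)] power_diff_1_eq[of a "p-1"] by simp
  moreover have "\<not> int p dvd a - 1" using assms(1) by (simp add: cong_iff_dvd_diff)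
  ultimately show ?thesis using pint prime_dvd_mult_iff by blast
qed

lemma per_upper:
  assumes k: "1 \<le> k"
  shows "per (Suc k) x \<le> p * per k x"
proof -
  define a where "a = chd (n^per k x) x"
  have "\<exists>m. 0 < m \<and> m \<le> p \<and> int p dvd cdef k x * (\<Sum>i<m. a ^ i)"
  proof (cases "[a = 1] (mod int p)")
    case True
    then have "[(\<Sum>i<p. a ^ i) = int p] (mod int p)" by (rule sum_cong1)
    then have "int p dvd (\<Sum>i<p. a ^ i)" by (simp add: cong_dvd_iff)
    then show ?thesis using p_gt by (intro exI[of _ p]) auto
  next
    case False
    have "int p dvd (\<Sum>i<p-1. a ^ i)" using geo_pm1[OF False] chd_pow_nz a_def by blast
    then show ?thesis using p_gt by (intro exI[of _ "p-1"]) auto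
  qed
  then obtain m where m: "0 < m" "m \<le> p" "int p dvd cdef k x * (\<Sum>i<m. a ^ i)" by blast
  then have "per (Suc k) x dvd per k x * m" using char[OF k] per_dvd a_def by blast
  then have "per (Suc k) x \<le> per k x * m" using m(1) per(1) by (intro dvd_imp_le) auto
  also have "\<dots> \<le> p * per k x" using m(2) by (simp add: mult.commute)
  finally show ?thesis .
qed

lemma step_good:
  assumes k: "1 \<le> k" and g: "good k x"
  shows "per (Suc k) x = p * per k x \<and> good (Suc k) x"
proof -
  define L where "L = per k x"
  define a where "a = chd (n^L) x"
  define c where "c = cdef k x"
  have a1: "[a = 1] (mod int p)" using g unfolding good_def a_def L_def by blast
  have nc: "\<not> int p dvd c"
  proof
    assume "int p dvd c"
    then have "int p ^ Suc k dvd int p ^ k * c" using pk_dvd_iff by blast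
    then have "[cheb (n^L) x = x] (mod int p ^ Suc k)" using cdef[of k x] unfolding L_def c_def
      by (simp add: cong_iff_dvd_diff)
    then show False using g unfolding good_def L_def by blast
  qed
  have ch: "[cheb (n^(L * m)) x = x] (mod int p ^ Suc k) \<longleftrightarrow> int p dvd int m" for m
  proof -
    have "[c * (\<Sum>i<m. a ^ i) = c * int m] (mod int p)" using sum_cong1[OF a1] by (rule cong_scalar_left)
    then have "int p dvd c * (\<Sum>i<m. a ^ i) \<longleftrightarrow> int p dvd c * int m" by (simp add: cong_dvd_iff)
    also have "\<dots> \<longleftrightarrow> int p dvd int m" using nc pint prime_dvd_mult_iff by blast
    finally show ?thesis using char[OF k, of x m] unfolding L_def a_def c_def by simp
  qed
  obtain m' where m': "per (Suc k) x = L * m'" using per_dvd_Suc L_def by blast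
  have m'0: "m' > 0" using per(1)[of "Suc k" x] m' by (cases m') auto
  have "int p dvd int m'" using ch[of m'] per(2)[of "Suc k" x] m' by simp
  then have pm: "p dvd m'" by simp
  have "[cheb (n^(L * p)) x = x] (mod int p ^ Suc k)" using ch by simp
  then have "per (Suc k) x dvd L * p" using per_dvd by blast
  then have "m' dvd p" using m' per(1)[of k x] L_def by simp
  then have mp: "m' = p" using pm by (simp add: dvd_antisym)
  have P1: "per (Suc k) x = p * per k x" using m' mp L_def by simp
  have cN: "[cheb (n^L) x = x] (mod int p)"
    using per(2)[of k x] L_def by (rule_tac cong_dvd_modulus) (use k in \<open>auto intro: dvd_power\<close>)
  have "[chd ((n^L)^p) x = a ^ p] (mod int p)" using chd_pow_cong[OF cN] a_def by simp
  moreover have "[a ^ p = 1 ^ p] (mod int p)" using a1 by (rule cong_pow)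
  moreover have e: "n^(per (Suc k) x) = (n^L)^p" using P1 L_def by (simp add: power_mult[symmetric] mult.commute)
  ultimately have G1: "[chd (n^(per (Suc k) x)) x = 1] (mod int p)"
    using cong_trans by fastforce
  have "\<not> int p ^ (k+2) dvd cheb ((n^L)^p) x - x"
    by (rule lemmaA[OF k _ nc]) (use cdef[of k x] a1 L_def c_def a_def in auto)
  then have G2: "\<not> [cheb (n^(per (Suc k) x)) x = x] (mod int p ^ Suc (Suc k))"
    using e by (simp add: cong_iff_dvd_diff)
  show ?thesis using P1 G1 G2 unfolding good_def by blast
qed

lemma step_a1:
  assumes k: "1 \<le> k" and ng: "\<not> good k x" and a1: "[chd (n^per k x) x = 1] (mod int p)"
  shows "per (Suc k) x = per k x"
proof -
  have "[cheb (n^(per k x)) x = x] (mod int p ^ Suc k)" using ng a1 unfolding good_def by blast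
  then have "per (Suc k) x dvd per k x" using per_dvd by blast
  then show ?thesis using per_dvd_Suc by (simp add: dvd_antisym)
qed

lemma step_an1:
  assumes k: "1 \<le> k" and a1: "\<not> [chd (n^per k x) x = 1] (mod int p)"
  shows "\<exists>m. 1 \<le> m \<and> m < p \<and> per (Suc k) x = per k x * m \<and>
      (m = 1 \<or> [chd (n^(per (Suc k) x)) x = 1] (mod int p))"
proof -
  define L where "L = per k x"
  define a where "a = chd (n^L) x"
  define c where "c = cdef k x"
  have chL: "[cheb (n^(L * m)) x = x] (mod int p ^ Suc k) \<longleftrightarrow> int p dvd c * (\<Sum>i<m. a ^ i)" for m
    using char[OF k, of x m] unfolding L_def a_def c_def by simp
  obtain m' where m': "per (Suc k) x = L * m'" using per_dvd_Suc L_def by blast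
  have L0: "L > 0" using per(1) L_def by simp
  have m'0: "m' > 0" using per(1)[of "Suc k" x] m' by (cases m') auto
  have "int p dvd (\<Sum>i<p-1. a ^ i)" using geo_pm1 a1 chd_pow_nz a_def L_def by blast
  then have "int p dvd c * (\<Sum>i<p-1. a ^ i)" by simp
  then have "per (Suc k) x dvd L * (p - 1)" using chL per_dvd by blast
  then have "m' dvd p - 1" using m' L0 by simp
  then have "m' \<le> p - 1" by (rule dvd_imp_le) (use p_gt in auto)
  then have m'p: "m' < p" using p_gt by simp
  have "m' = 1 \<or> [chd (n^(per (Suc k) x)) x = 1] (mod int p)"
  proof (cases "m' = 1")
    case False
    have "int p dvd c * (\<Sum>i<m'. a ^ i)" using chL[of m'] per(2)[of "Suc k" x] m' by simp
    moreover have "\<not> int p dvd c"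
    proof
      assume "int p dvd c"
      then have "int p dvd c * (\<Sum>i<1. a ^ i)" by simp
      then have "per (Suc k) x dvd L * 1" using chL per_dvd by blast
      then have "m' dvd 1" using m' L0 by simp
      then show False using False by simp
    qed
    ultimately have "int p dvd (\<Sum>i<m'. a ^ i)" using pint prime_dvd_mult_iff by blast
    then have "int p dvd a ^ m' - 1" using power_diff_1_eq[of a m'] by simp
    then have am: "[a ^ m' = 1] (mod int p)" by (simp add: cong_iff_dvd_diff)
    have cN: "[cheb (n^L) x = x] (mod int p)"
      using per(2)[of k x] L_def by (rule_tac cong_dvd_modulus) (use k in \<open>auto intro: dvd_power\<close>)
    have "[chd ((n^L)^m') x = a ^ m'] (mod int p)" using chd_pow_cong[OF cN] a_def by simp
    moreover have "n^(per (Suc k) x) = (n^L)^m'" using m' by (simp add: power_mult)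
    ultimately show ?thesis using am cong_trans by fastforce
  qed simp
  then show ?thesis using m' m'0 m'p L_def by (intro exI[of _ m']) auto
qed

lemma invariant:
  assumes "1 \<le> k"
  shows "good k x \<or> (\<exists>m. 1 \<le> m \<and> m < p \<and> per k x = per 1 x * m \<and>
           (m = 1 \<or> [chd (n^(per k x)) x = 1] (mod int p)))"
  using assms
proof (induction k rule: nat_induct_at_least)
  case base
  then show ?case using p_gt by (intro disjI2 exI[of _ 1]) auto
next
  case (Suc k)
  show ?case
  proof (cases "good k x")
    case True
    then show ?thesis using step_good[OF Suc(1)] by blast
  next
    case False
    then obtain m where m: "1 \<le> m" "m < p" "per k x = per 1 x * m"
      "m = 1 \<or> [chd (n^(per k x)) x = 1] (mod int p)" using Suc(2) by blast
    show ?thesis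
    proof (cases "[chd (n^per k x) x = 1] (mod int p)")
      case True
      then have "per (Suc k) x = per k x" using step_a1[OF Suc(1) False] by blast
      then show ?thesis using m True by (intro disjI2 exI[of _ m]) auto
    next
      case a1: False
      then have m1: "m = 1" using m(4) by blast
      obtain m' where "1 \<le> m'" "m' < p" "per (Suc k) x = per k x * m'"
        "m' = 1 \<or> [chd (n^(per (Suc k) x)) x = 1] (mod int p)" using step_an1[OF Suc(1) a1] by blast
      then show ?thesis using m(3) m1 by (intro disjI2 exI[of _ m']) auto
    qed
  qed
qed

lemma big_good:
  assumes k: "1 \<le> k" and big: "p^2 \<le> per k x"
  shows "good k x"
proof (rule ccontr)
  assume ng: "\<not> good k x"
  then obtain m where m: "m < p" "per k x = per 1 x * m" using invariant[OF k, of x] by blast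
  have "per k x \<le> p * (p - 1)" using m per1_le[of x] by (simp add: mult_le_mono)
  also have "\<dots> < p^2" using p_gt by (simp add: power2_eq_square algebra_simps)
  finally show False using big by simp
qed

lemma good_nc: "good k x \<Longrightarrow> \<not> int p dvd cdef k x"
proof
  assume g: "good k x" and d: "int p dvd cdef k x"
  then have "int p ^ Suc k dvd int p ^ k * cdef k x" using pk_dvd_iff by blast
  then have "[cheb (n^per k x) x = x] (mod int p ^ Suc k)" using cdef[of k x]
    by (simp add: cong_iff_dvd_diff)
  then show False using g unfolding good_def by blast
qed

lemma translate:
  assumes k: "1 \<le> k" and g: "good k x" and w: "[w = x] (mod int p ^ k)"
  shows "\<exists>M. [cheb (n^M) x = w] (mod int p ^ Suc k)"
proof -
  define L where "L = per k x"
  define a where "a = chd (n^L) x"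
  define c where "c = cdef k x"
  have a1: "[a = 1] (mod int p)" using g unfolding good_def a_def L_def by blast
  have nc: "\<not> int p dvd c" using good_nc[OF g] c_def by simp
  have "int p ^ k dvd w - x" using w by (simp add: cong_iff_dvd_diff)
  then obtain t where t: "w - x = int p ^ k * t" by (elim dvdE)
  have "coprime c (int p)" using prime_imp_coprime[OF pint nc] by (simp add: coprime_commute)
  then obtain y where y: "[c * y = 1] (mod int p)" using cong_solve_coprime_int by blast
  define m where "m = nat ((y * t) mod int p)"
  have mi: "int m = (y * t) mod int p" unfolding m_def using p_pos by simp
  obtain s where s: "cheb ((n^L)^m) x = x + int p ^ k * s" "[s = c * (\<Sum>i<m. a ^ i)] (mod int p)"
    using affine[OF k cdef[of k x]] L_def a_def c_def by blast
  have "[c * (\<Sum>i<m. a ^ i) = c * int m] (mod int p)" by (rule cong_scalar_left[OF sum_cong1[OF a1]])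
  moreover have "[c * int m = c * (y * t)] (mod int p)" unfolding mi by (simp add: cong_def mod_mult_right_eq)
  moreover have "[c * (y * t) = 1 * t] (mod int p)"
  proof -
    have "[c * y * t = 1 * t] (mod int p)" using y by (rule cong_scalar_right)
    then show ?thesis by (simp add: mult.assoc)
  qed
  ultimately have "[s = 1 * t] (mod int p)" using s(2) cong_trans by blast
  then have "[s = t] (mod int p)" by simp
  then have "int p dvd s - t" by (simp add: cong_iff_dvd_diff)
  then have "int p ^ Suc k dvd int p ^ k * (s - t)" using pk_dvd_iff by blast
  moreover have "cheb ((n^L)^m) x - w = int p ^ k * (s - t)" using s(1) t by (simp add: algebra_simps)
  ultimately have "[cheb (n^(L*m)) x = w] (mod int p ^ Suc k)" by (simp add: power_mult cong_iff_dvd_diff)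
  then show ?thesis by blast
qed

lemma proj_range:
  "(\<lambda>y. y mod int p ^ k) ` range (\<lambda>i. cheb (n^i) x mod int p ^ Suc k) = range (\<lambda>i. cheb (n^i) x mod int p ^ k)"
proof -
  have "(cheb (n^i) x mod int p ^ Suc k) mod int p ^ k = cheb (n^i) x mod int p ^ k" for i
    by (rule mod_mod_cancel) (simp add: le_imp_power_dvd)
  then show ?thesis by (simp add: image_image)
qed

lemma proj:
  assumes x: "x \<in> {0..<int p ^ Suc k}"
  shows "(\<lambda>y. y mod int p ^ k) ` cycle_of (int p) n (Suc k) x = cycle_of (int p) n k (x mod int p ^ k)"
proof -
  have xm: "x mod int p ^ k \<in> {0..<int p ^ k}" using p_pos by simp
  have "cheb (n^i) (x mod int p ^ k) mod int p ^ k = cheb (n^i) x mod int p ^ k" for i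
    using cheb_congr[of "x mod int p ^ k" x "int p ^ k" "n^i"] by (simp add: cong_def)
  then show ?thesis using orbit_range[OF x] orbit_range[OF xm] proj_range by simp
qed

lemma level:
  assumes k: "1 \<le> k" and big: "p^2 \<le> T" and pe: "per (Suc k) x = p * T"
  shows "per k x = T \<and> good k x"
proof -
  have "p * T \<le> p * per k x" using per_upper[OF k, of x] pe by simp
  then have "T \<le> per k x" using p_gt by simp
  then have g: "good k x" using big_good[OF k] big by simp
  then have "per (Suc k) x = p * per k x" using step_good[OF k] by blast
  then show ?thesis using pe g p_gt by simp
qed

lemma count:
  assumes k: "1 \<le> k" and big: "p^2 \<le> T"
  shows "num_cycles (int p) n (p * T) (Suc k) = num_cycles (int p) n T k"
proof -
  define A where "A = {C. \<exists>x\<in>vertices (int p) (Suc k). C = cycle_of (int p) n (Suc k) x \<and> card C = p * T}"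
  define B where "B = {C. \<exists>x\<in>vertices (int p) k. C = cycle_of (int p) n k x \<and> card C = T}"
  define \<Phi> where "\<Phi> C = (\<lambda>y. y mod int p ^ k) ` C" for C :: "int set"
  have pk_le: "int p ^ k \<le> int p ^ Suc k" using p_pos by simp
  have img: "\<Phi> ` A = B"
  proof
    show "\<Phi> ` A \<subseteq> B"
    proof
      fix D assume "D \<in> \<Phi> ` A"
      then obtain x where x: "x \<in> {0..<int p ^ Suc k}" "card (cycle_of (int p) n (Suc k) x) = p * T"
        "D = \<Phi> (cycle_of (int p) n (Suc k) x)" unfolding A_def vertices_def by auto
      have pe: "per (Suc k) x = p * T" using x orbit_card by simp
      have xm: "x mod int p ^ k \<in> {0..<int p ^ k}" using p_pos by simp
      have "per k (x mod int p ^ k) = per k x" by (rule per_cong) (simp add: cong_def)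
      then have "card (cycle_of (int p) n k (x mod int p ^ k)) = T"
        using orbit_card[OF xm] level[OF k big pe] by simp
      moreover have "D = cycle_of (int p) n k (x mod int p ^ k)" using x(3) proj[OF x(1)] \<Phi>_def by simp
      ultimately show "D \<in> B" unfolding B_def vertices_def using xm by blast
    qed
  next
    show "B \<subseteq> \<Phi> ` A"
    proof
      fix D assume "D \<in> B"
      then obtain x where x: "x \<in> {0..<int p ^ k}" "D = cycle_of (int p) n k x" "card D = T"
        unfolding B_def vertices_def by auto
      have pe: "per k x = T" using x orbit_card by simp
      then have g: "good k x" using big_good[OF k] big by simp
      then have pe1: "per (Suc k) x = p * T" using step_good[OF k] pe by simp
      have x1: "x \<in> {0..<int p ^ Suc k}" using x(1) pk_le by auto
      have "cycle_of (int p) n (Suc k) x \<in> A" unfolding A_def vertices_def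
        using x1 orbit_card[OF x1] pe1 by auto
      moreover have "\<Phi> (cycle_of (int p) n (Suc k) x) = D"
        using proj[OF x1] x \<Phi>_def by simp
      ultimately show "D \<in> \<Phi> ` A" by force
    qed
  qed
  have inj: "inj_on \<Phi> A"
  proof
    fix C1 C2 assume C1: "C1 \<in> A" and C2: "C2 \<in> A" and eq: "\<Phi> C1 = \<Phi> C2"
    obtain x1 where x1: "x1 \<in> {0..<int p ^ Suc k}" "C1 = cycle_of (int p) n (Suc k) x1" "card C1 = p * T"
      using C1 unfolding A_def vertices_def by auto
    obtain x2 where x2: "x2 \<in> {0..<int p ^ Suc k}" "C2 = cycle_of (int p) n (Suc k) x2" "card C2 = p * T"
      using C2 unfolding A_def vertices_def by auto
    have r1: "C1 = range (\<lambda>i. cheb (n^i) x1 mod int p ^ Suc k)" using orbit_range[OF x1(1)] x1(2) by simp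
    have r2: "C2 = range (\<lambda>i. cheb (n^i) x2 mod int p ^ Suc k)" using orbit_range[OF x2(1)] x2(2) by simp
    have "x2 \<in> C2" unfolding r2 using x2(1) by (auto intro: range_eqI[of _ _ 0])
    then have "x2 mod int p ^ k \<in> \<Phi> C1" using eq \<Phi>_def by auto
    then obtain i where i: "x2 mod int p ^ k = cheb (n^i) x1 mod int p ^ k"
      unfolding \<Phi>_def r1 proj_range by auto
    define z where "z = cheb (n^i) x1"
    have pe: "per (Suc k) x1 = p * T" using x1 orbit_card by simp
    have "per k z = T" unfolding z_def per_iter using level[OF k big pe] by simp
    then have gz: "good k z" using big_good[OF k] big by simp
    have "[x2 = z] (mod int p ^ k)" using i z_def by (simp add: cong_def)
    then obtain M where M: "[cheb (n^M) z = x2] (mod int p ^ Suc k)" using translate[OF k gz] by blast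
    have x2e: "[x2 = cheb (n^(M+i)) x1] (mod int p ^ Suc k)" using M unfolding z_def comp_pow
      by (simp add: cong_sym)
    have sub: "C2 \<subseteq> C1"
    proof
      fix y assume "y \<in> C2"
      then obtain j where j: "y = cheb (n^j) x2 mod int p ^ Suc k" unfolding r2 by auto
      have "[cheb (n^j) x2 = cheb (n^j) (cheb (n^(M+i)) x1)] (mod int p ^ Suc k)" using x2e by (rule cheb_congr)
      then have "y = cheb (n^(j + (M+i))) x1 mod int p ^ Suc k" using j by (simp add: cong_def comp_pow)
      then show "y \<in> C1" unfolding r1 by auto
    qed
    have fin: "finite C1" using orbit_sub'[OF x1(1)] x1(2) finite_subset by blast
    show "C1 = C2" using card_subset_eq[OF fin sub] x1(3) x2(3) by simp
  qed
  have "card A = card B" using card_image[OF inj] img by simp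
  then show ?thesis unfolding num_cycles_def A_def B_def by simp
qed

end

theorem theorem2:
  fixes p :: int and n k Tc :: nat
  assumes "prime p" and "p > 3" and "n > 1"
    and "gcd (int n) p = 1" and "gcd (int n) (p^2 - 1) = 1"
    and "k \<ge> 1" and "Tc \<ge> 1" and "int Tc \<ge> p^2"
  shows "num_cycles p n (nat p * Tc) (k + 1) = num_cycles p n Tc k"
proof -
  define pn where "pn = nat p"
  have p_eq: "p = int pn" using assms(2) pn_def by simp
  have pp: "prime pn" using assms(1) p_eq by simp
  have pg: "pn > 3" using assms(2) p_eq by simp
  have np: "\<not> pn dvd n"
  proof
    assume "pn dvd n"
    then have "p dvd int n" using p_eq by simp
    then have "p dvd gcd (int n) p" by simp
    then have "p dvd 1" using assms(4) by simp
    then show False using assms(2) by (auto dest: zdvd_imp_le)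
  qed
  have e: "int (pn^2 - 1) = p^2 - 1" using pg p_eq by (simp add: of_nat_diff)
  have "gcd (int n) (int (pn^2 - 1)) = 1" using assms(5) e by simp
  then have "int (gcd n (pn^2 - 1)) = 1" by (simp only: gcd_int_int_eq)
  then have "gcd n (pn^2 - 1) = 1" by (simp only: of_nat_eq_1_iff)
  then have cop: "coprime n (pn^2 - 1)" by (rule coprime_iff_gcd_eq_1[THEN iffD2])
  interpret chs pn n by (intro chs.intro pp pg np cop)
  have T: "pn^2 \<le> Tc"
  proof -
    have "int (pn^2) \<le> int Tc" using assms(8) p_eq by simp
    then show ?thesis by (simp only: of_nat_le_iff)
  qed
  have "num_cycles (int pn) n (pn * Tc) (Suc k) = num_cycles (int pn) n Tc k"
    by (rule count) (use assms(6) T in auto)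
  then show ?thesis using p_eq by simp
qed

end
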